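(* There exist absolute constants $\kappa_1,\kappa_2>1$ such that if $b_1\ge1$, $b_2\ge\kappa_1b_1$ and $b_3\ge\kappa_2b_2$, then for all $\beta\ge1$ (and $\gamma=(\alpha,\beta)$), $\mathcal{N}_{\gamma,2}(\mathcal{C}^{(3)}_{b_1,b_2,b_3})\subset\mathcal{C}^{(3)}_{b_1,b_2,b_3}$.
   Context: For $\beta\ge1$ let $g_{\gamma,2}:[0,1]\to[\tfrac12,1]$, $g_{\gamma,2}(x)=\tfrac12(x^{1/\beta}+1)$, be the inverse of $x\mapsto2^\beta(x-\tfrac12)^\beta$ on $[\tfrac12,1]$ (it does not depend on $\alpha$), and $\mathcal{N}_{\gamma,2}(\varphi)(x)=g_{\gamma,2}'(x)\,\varphi(g_{\gamma,2}(x))$. For $b_1,b_2,b_3>0$, $\mathcal{C}^{(3)}_{b_1,b_2,b_3}$ is the set of $\varphi\in C^3((0,1])$ with $\varphi(x)\ge0$, $|\varphi'(x)|\le\frac{b_1}{x}\varphi(x)$, $|\varphi''(x)|\le\frac{b_2}{x^2}\varphi(x)$, $|\varphi'''(x)|\le\frac{b_3}{x^3}\varphi(x)$ for all $x\in(0,1]$. *)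

theory Defs
  imports "HOL-Analysis.Analysis"
begin

text \<open>The inverse branch g_{gamma,2}(x) = (x^(1/beta) + 1)/2 (independent of alpha).\<close>
definition g2 :: "real \<Rightarrow> real \<Rightarrow> real" where
  "g2 \<beta> x = (x powr (1 / \<beta>) + 1) / 2"

definition N2 :: "real \<Rightarrow> (real \<Rightarrow> real) \<Rightarrow> real \<Rightarrow> real" where
  "N2 \<beta> \<phi> x = deriv (g2 \<beta>) x * \<phi> (g2 \<beta> x)"

definition C3 :: "real \<Rightarrow> real \<Rightarrow> real \<Rightarrow> (real \<Rightarrow> real) set" where
  "C3 b1 b2 b3 = {\<phi>. \<exists>f1 f2 f3.
     (\<forall>x\<in>{0<..1}. (\<phi> has_real_derivative f1 x) (at x within {0<..1}) \<and>
                   (f1 has_real_derivative f2 x) (at x within {0<..1}) \<and>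
                   (f2 has_real_derivative f3 x) (at x within {0<..1})) \<and>
     continuous_on {0<..1} f3 \<and>
     (\<forall>x\<in>{0<..1}. \<phi> x \<ge> 0 \<and>
        \<bar>f1 x\<bar> \<le> b1 / x * \<phi> x \<and>
        \<bar>f2 x\<bar> \<le> b2 / x ^ 2 * \<phi> x \<and>
        \<bar>f3 x\<bar> \<le> b3 / x ^ 3 * \<phi> x)}"

end

theory Submission imports Defs begin
lemma bound3:
  fixes X H U P a t b1 b2 b3 A1 A2 A3 :: real
  assumes X: "X > 0" and H: "H > 0" and U: "U > 0" and P: "P \<ge> 0"
    and a0: "0 \<le> a" and a1: "a \<le> 1" and t: "t = X * H / U" and t2: "t \<le> 1/2"
    and A1: "\<bar>A1\<bar> \<le> b1 / U * P" and A2: "\<bar>A2\<bar> \<le> b2 / U^2 * P"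
    and A3: "\<bar>A3\<bar> \<le> b3 / U^3 * P"
    and b1: "b1 \<ge> 1" and b2: "b2 \<ge> 5 * b1" and b3: "b3 \<ge> 5 * b2"
  shows "\<bar>(- a * (a+1) * (a+2) * H / X^3) * P + (4 * H * (a * (a+1) * H / X^2) + 3 * (- a * H / X)^2) * A1
          + 6 * H^2 * (- a * H / X) * A2 + H^4 * A3\<bar> \<le> b3 / X^3 * (H * P)"
proof -
  define K where "K = H * P / X^3"
  have K0: "K \<ge> 0" using X H P by (simp add: K_def)
  have t0: "t \<ge> 0" using t X H U by simp
  have HU: "H / U = t / X" using t X U by (simp add: field_simps)
  have T1: "\<bar>(- a * (a+1) * (a+2) * H / X^3) * P\<bar> \<le> 6 * K"
  proof -
    have e1: "a * (a+1) \<le> 1 * 2" using a0 a1 by (intro mult_mono) auto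
    have "a * (a+1) * (a+2) \<le> 2 * 3" using e1 a0 a1 mult_mono[of "a * (a+1)" 2 "a+2" 3] by simp
    moreover have "\<bar>(- a * (a+1) * (a+2) * H / X^3) * P\<bar> = (a * (a+1) * (a+2)) * K"
      using a0 X H P by (simp add: K_def abs_mult)
    ultimately show ?thesis using K0 mult_right_mono[of "a * (a+1) * (a+2)" 6 K] by simp
  qed
  have T2: "\<bar>(4 * H * (a * (a+1) * H / X^2) + 3 * (- a * H / X)^2) * A1\<bar> \<le> 11 * b1 * t * K"
  proof -
    have c: "4 * H * (a * (a+1) * H / X^2) + 3 * (- a * H / X)^2 = (4*a*(a+1) + 3*a^2) * (H^2/X^2)"
      using X by (simp add: field_simps power2_eq_square)
    have e1: "a * (a+1) \<le> 1 * 2" using a0 a1 by (intro mult_mono) auto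
    have c1: "0 \<le> 4*a*(a+1) + 3*a^2" using a0 by simp
    have c2: "4*a*(a+1) + 3*a^2 \<le> 11" using e1 power_le_one[OF a0 a1, of 2] by simp
    note c1 = c1 c2
    have "\<bar>(4*a*(a+1) + 3*a^2) * (H^2/X^2) * A1\<bar> = (4*a*(a+1) + 3*a^2) * (H^2/X^2) * \<bar>A1\<bar>"
      using c1 by (simp add: abs_mult)
    also have "\<dots> \<le> 11 * (H^2/X^2) * (b1 / U * P)"
      using c1 A1 by (intro mult_mono) auto
    also have "\<dots> = 11 * b1 * (H/U) * X * K" by (simp add: K_def field_simps power2_eq_square power3_eq_cube)
    also have "\<dots> = 11 * b1 * t * K" using HU X by simp
    finally show ?thesis using c by simp
  qed
  have T3: "\<bar>6 * H^2 * (- a * H / X) * A2\<bar> \<le> 6 * b2 * t^2 * K"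
  proof -
    have "\<bar>6 * H^2 * (- a * H / X) * A2\<bar> = 6 * a * (H^3/X) * \<bar>A2\<bar>"
      using a0 H X by (simp add: abs_mult power3_eq_cube power2_eq_square)
    also have "\<dots> \<le> 6 * 1 * (H^3/X) * (b2 / U^2 * P)"
      using a0 a1 A2 H X by (intro mult_mono) auto
    also have "\<dots> = 6 * b2 * (H/U)^2 * X^2 * K" by (simp add: K_def field_simps power2_eq_square power3_eq_cube)
    also have "\<dots> = 6 * b2 * t^2 * K" using HU X by (simp add: power_divide)
    finally show ?thesis .
  qed
  have T4: "\<bar>H^4 * A3\<bar> \<le> b3 * t^3 * K"
  proof -
    have "\<bar>H^4 * A3\<bar> = H^4 * \<bar>A3\<bar>" by (simp add: abs_mult)
    also have "\<dots> \<le> H^4 * (b3 / U^3 * P)" using A3 by (intro mult_left_mono) auto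
    also have "\<dots> = b3 * (H/U)^3 * X^3 * K" using X by (simp add: K_def field_simps power3_eq_cube power4_eq_xxxx)
    also have "\<dots> = b3 * t^3 * K" using HU X by (simp add: power_divide)
    finally show ?thesis .
  qed
  have "t^2 \<le> 1/4" using power_mono[OF t2 t0, of 2] by (simp add: power_divide)
  have "t^3 \<le> 1/8" using power_mono[OF t2 t0, of 3] by (simp add: power_divide)
  have b30: "b3 \<ge> 0" "b2 \<ge> 0" "b1 \<ge> 0" using b1 b2 b3 by auto
  have S: "6 * K + 11 * b1 * t * K + 6 * b2 * t^2 * K + b3 * t^3 * K \<le> b3 * K"
  proof -
    have "11 * b1 * t \<le> 11 * b1 * (1/2)" using b30 t2 by (intro mult_left_mono) auto
    moreover have "6 * b2 * t^2 \<le> 6 * b2 * (1/4)" using b30 \<open>t^2 \<le> 1/4\<close> by (intro mult_left_mono) auto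
    moreover have "b3 * t^3 \<le> b3 * (1/8)" using b30 \<open>t^3 \<le> 1/8\<close> by (intro mult_left_mono) auto
    ultimately have "6 + 11 * b1 * t + 6 * b2 * t^2 + b3 * t^3 \<le> b3" using b1 b2 b3 by linarith
    from mult_right_mono[OF this K0] show ?thesis by (simp add: algebra_simps)
  qed
  have "b3 / X^3 * (H * P) = b3 * K" by (simp add: K_def)
  then show ?thesis using T1 T2 T3 T4 S unfolding abs_le_iff by (elim conjE; intro conjI; linarith)
qed
lemma bound1:
  fixes X H U P a t b1 A1 h1 :: real
  assumes X: "X > 0" and H: "H > 0" and U: "U > 0" and P: "P \<ge> 0"
    and a0: "0 \<le> a" and a1: "a \<le> 1" and t: "t = X * H / U" and t2: "t \<le> (1 - a)/2"
    and h1: "h1 = - a * H / X"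
    and A1: "\<bar>A1\<bar> \<le> b1 / U * P" and b1: "b1 \<ge> 1"
  shows "\<bar>h1 * P + H * H * A1\<bar> \<le> b1 / X * (H * P)"
proof -
  define K where "K = H * P / X"
  have K0: "K \<ge> 0" using X H P by (simp add: K_def)
  have HU: "H / U = t / X" using t X U by (simp add: field_simps)
  have T1: "\<bar>h1 * P\<bar> = a * K" using a0 X H P by (simp add: K_def abs_mult h1)
  have "\<bar>H * H * A1\<bar> = H * H * \<bar>A1\<bar>" by (simp add: abs_mult)
  also have "\<dots> \<le> H * H * (b1 / U * P)" using A1 by (intro mult_left_mono) auto
  also have "\<dots> = b1 * (H / U) * X * K" using X by (simp add: K_def field_simps)
  also have "\<dots> = b1 * t * K" using HU X by simp
  finally have T2: "\<bar>H * H * A1\<bar> \<le> b1 * t * K" .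
  have "b1 * t \<le> b1 * ((1 - a)/2)" using b1 t2 by (intro mult_left_mono) auto
  moreover have "b1 * (1 + a) \<ge> 1 * (1 + a)" using b1 a0 by (intro mult_right_mono) auto
  ultimately have "a + b1 * t \<le> b1" using a1 by (simp add: algebra_simps)
  from mult_right_mono[OF this K0] have "a * K + b1 * t * K \<le> b1 * K" by (simp add: algebra_simps)
  moreover have "b1 / X * (H * P) = b1 * K" by (simp add: K_def)
  moreover have T1': "\<bar>h1 * P\<bar> \<le> a * K" using T1 by simp
  ultimately show ?thesis using T1' T2 unfolding abs_le_iff by (elim conjE; intro conjI; linarith)
qed

lemma bound2:
  fixes X H U P a t b1 b2 A1 A2 h1 h2 :: real
  assumes X: "X > 0" and H: "H > 0" and U: "U > 0" and P: "P \<ge> 0"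
    and a0: "0 \<le> a" and a1: "a \<le> 1" and t: "t = X * H / U" and t2: "t \<le> 1/2"
    and h1: "h1 = - a * H / X" and h2: "h2 = a * (a+1) * H / X^2"
    and A1: "\<bar>A1\<bar> \<le> b1 / U * P" and A2: "\<bar>A2\<bar> \<le> b2 / U^2 * P"
    and b1: "b1 \<ge> 1" and b2: "b2 \<ge> 5 * b1"
  shows "\<bar>h2 * P + 3 * H * h1 * A1 + H * H * H * A2\<bar> \<le> b2 / X^2 * (H * P)"
proof -
  define K where "K = H * P / X^2"
  have K0: "K \<ge> 0" using X H P by (simp add: K_def)
  have t0: "t \<ge> 0" using t X H U by simp
  have HU: "H / U = t / X" using t X U by (simp add: field_simps)
  have T1: "\<bar>h2 * P\<bar> \<le> 2 * K"
  proof -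
    have "a * (a+1) \<le> 1 * 2" using a0 a1 by (intro mult_mono) auto
    moreover have "\<bar>h2 * P\<bar> = (a * (a+1)) * K"
      using a0 X H P by (simp add: K_def abs_mult h2)
    ultimately show ?thesis using K0 mult_right_mono[of "a * (a+1)" 2 K] by simp
  qed
  have T2: "\<bar>3 * H * h1 * A1\<bar> \<le> 3 * b1 * t * K"
  proof -
    have "\<bar>3 * H * h1 * A1\<bar> = 3 * a * (H * H / X) * \<bar>A1\<bar>"
      using a0 H X by (simp add: abs_mult h1)
    also have "\<dots> \<le> 3 * 1 * (H * H / X) * (b1 / U * P)"
      using a0 a1 A1 H X by (intro mult_mono) auto
    also have "\<dots> = 3 * b1 * (H/U) * X * K" using X by (simp add: K_def field_simps power2_eq_square)
    also have "\<dots> = 3 * b1 * t * K" using HU X by simp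
    finally show ?thesis .
  qed
  have T3: "\<bar>H * H * H * A2\<bar> \<le> b2 * t^2 * K"
  proof -
    have "\<bar>H * H * H * A2\<bar> = H * H * H * \<bar>A2\<bar>" using H by (simp add: abs_mult)
    also have "\<dots> \<le> H * H * H * (b2 / U^2 * P)" using A2 H by (intro mult_left_mono) auto
    also have "\<dots> = b2 * (H/U)^2 * X^2 * K" using X by (simp add: K_def field_simps power2_eq_square)
    also have "\<dots> = b2 * t^2 * K" using HU X by (simp add: power_divide)
    finally show ?thesis .
  qed
  have "t^2 \<le> 1/4" using power_mono[OF t2 t0, of 2] by (simp add: power_divide)
  have b30: "b2 \<ge> 0" "b1 \<ge> 0" using b1 b2 by auto
  have S: "2 * K + 3 * b1 * t * K + b2 * t^2 * K \<le> b2 * K"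
  proof -
    have "3 * b1 * t \<le> 3 * b1 * (1/2)" using b30 t2 by (intro mult_left_mono) auto
    moreover have "b2 * t^2 \<le> b2 * (1/4)" using b30 \<open>t^2 \<le> 1/4\<close> by (intro mult_left_mono) auto
    ultimately have "2 + 3 * b1 * t + b2 * t^2 \<le> b2" using b1 b2 by linarith
    from mult_right_mono[OF this K0] show ?thesis by (simp add: algebra_simps)
  qed
  have "b2 / X^2 * (H * P) = b2 * K" by (simp add: K_def)
  then show ?thesis using T1 T2 T3 S unfolding abs_le_iff by (elim conjE; intro conjI; linarith)
qed

lemma comp_within:
  assumes uS: "\<And>x. x \<in> S \<Longrightarrow> u x \<in> S"
    and du: "(u has_real_derivative h) (at x within S)" and x: "x \<in> S"
    and dg: "(g has_real_derivative g') (at (u x) within S)"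
  shows "((\<lambda>x. g (u x)) has_real_derivative g' * h) (at x within S)"
proof -
  have "u ` S \<subseteq> S" using uS by auto
  then have "(g has_real_derivative g') (at (u x) within u ` S)" using dg DERIV_subset by blast
  from DERIV_image_chain[OF this du] show ?thesis by (simp add: o_def)
qed

lemma chain3:
  fixes S :: "real set"
  assumes uS: "\<And>x. x \<in> S \<Longrightarrow> u x \<in> S"
    and du: "\<And>x. x \<in> S \<Longrightarrow> (u has_real_derivative h x) (at x within S)"
    and dh: "\<And>x. x \<in> S \<Longrightarrow> (h has_real_derivative h1 x) (at x within S)"
    and dh1: "\<And>x. x \<in> S \<Longrightarrow> (h1 has_real_derivative h2 x) (at x within S)"
    and dh2: "\<And>x. x \<in> S \<Longrightarrow> (h2 has_real_derivative h3 x) (at x within S)"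
    and d0: "\<And>x. x \<in> S \<Longrightarrow> (p has_real_derivative f1 x) (at x within S)"
    and d1: "\<And>x. x \<in> S \<Longrightarrow> (f1 has_real_derivative f2 x) (at x within S)"
    and d2: "\<And>x. x \<in> S \<Longrightarrow> (f2 has_real_derivative f3 x) (at x within S)"
    and x: "x \<in> S"
  shows "((\<lambda>x. h x * p (u x)) has_real_derivative (h1 x * p (u x) + h x * h x * f1 (u x))) (at x within S)"
    and "((\<lambda>x. h1 x * p (u x) + h x * h x * f1 (u x)) has_real_derivative
            (h2 x * p (u x) + 3 * h x * h1 x * f1 (u x) + h x * h x * h x * f2 (u x))) (at x within S)"
    and "((\<lambda>x. h2 x * p (u x) + 3 * h x * h1 x * f1 (u x) + h x * h x * h x * f2 (u x)) has_real_derivative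
            (h3 x * p (u x) + (4 * h x * h2 x + 3 * h1 x * h1 x) * f1 (u x) + 6 * h x * h x * h1 x * f2 (u x)
              + h x * h x * h x * h x * f3 (u x))) (at x within S)"
proof -
  have c0: "((\<lambda>x. p (u x)) has_real_derivative f1 (u x) * h x) (at x within S)"
    by (rule comp_within[OF uS du[OF x] x d0[OF uS[OF x]]])
  have c1: "((\<lambda>x. f1 (u x)) has_real_derivative f2 (u x) * h x) (at x within S)"
    by (rule comp_within[OF uS du[OF x] x d1[OF uS[OF x]]])
  have c2: "((\<lambda>x. f2 (u x)) has_real_derivative f3 (u x) * h x) (at x within S)"
    by (rule comp_within[OF uS du[OF x] x d2[OF uS[OF x]]])
  note H = dh[OF x] and H1 = dh1[OF x] and H2 = dh2[OF x]
  show "((\<lambda>x. h x * p (u x)) has_real_derivative (h1 x * p (u x) + h x * h x * f1 (u x))) (at x within S)"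
    by (rule DERIV_cong[OF DERIV_mult[OF H c0]]) (simp add: algebra_simps)
  show "((\<lambda>x. h1 x * p (u x) + h x * h x * f1 (u x)) has_real_derivative
            (h2 x * p (u x) + 3 * h x * h1 x * f1 (u x) + h x * h x * h x * f2 (u x))) (at x within S)"
    by (rule DERIV_cong[OF DERIV_add[OF DERIV_mult[OF H1 c0] DERIV_mult[OF DERIV_mult[OF H H] c1]]])
      (simp add: algebra_simps)
  show "((\<lambda>x. h2 x * p (u x) + 3 * h x * h1 x * f1 (u x) + h x * h x * h x * f2 (u x)) has_real_derivative
            (h3 x * p (u x) + (4 * h x * h2 x + 3 * h1 x * h1 x) * f1 (u x) + 6 * h x * h x * h1 x * f2 (u x)
              + h x * h x * h x * h x * f3 (u x))) (at x within S)"
    by (rule DERIV_cong[OF DERIV_add[OF DERIV_add[OF DERIV_mult[OF H2 c0]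
          DERIV_mult[OF DERIV_mult[OF DERIV_cmult[OF H, of 3] H1] c1]]
          DERIV_mult[OF DERIV_mult[OF DERIV_mult[OF H H] H] c2]]])
      (simp add: algebra_simps)
qed

lemma bound3':
  fixes X H U P a t b1 b2 b3 A1 A2 A3 h1 h2 h3 :: real
  assumes X: "X > 0" and H: "H > 0" and U: "U > 0" and P: "P \<ge> 0"
    and a0: "0 \<le> a" and a1: "a \<le> 1" and t: "t = X * H / U" and t2: "t \<le> 1/2"
    and h1: "h1 = - a * H / X" and h2: "h2 = a * (a+1) * H / X^2"
    and h3: "h3 = - a * (a+1) * (a+2) * H / X^3"
    and A1: "\<bar>A1\<bar> \<le> b1 / U * P" and A2: "\<bar>A2\<bar> \<le> b2 / U^2 * P"
    and A3: "\<bar>A3\<bar> \<le> b3 / U^3 * P"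
    and b1: "b1 \<ge> 1" and b2: "b2 \<ge> 5 * b1" and b3: "b3 \<ge> 5 * b2"
  shows "\<bar>h3 * P + (4 * H * h2 + 3 * h1 * h1) * A1 + 6 * H * H * h1 * A2 + H * H * H * H * A3\<bar>
           \<le> b3 / X^3 * (H * P)"
proof -
  have e: "h3 * P + (4 * H * h2 + 3 * h1 * h1) * A1 + 6 * H * H * h1 * A2 + H * H * H * H * A3 =
    (- a * (a+1) * (a+2) * H / X^3) * P + (4 * H * (a * (a+1) * H / X^2) + 3 * (- a * H / X)^2) * A1
          + 6 * H^2 * (- a * H / X) * A2 + H^4 * A3"
    using X by (simp add: h1 h2 h3 power2_eq_square power3_eq_cube power4_eq_xxxx field_simps)
  show ?thesis unfolding e by (rule bound3[OF assms(1-8) A1 A2 A3 b1 b2 b3])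
qed

lemma powr_shift: "0 < (x::real) \<Longrightarrow> x powr (r + 1) = x powr r * x"
  by (subst powr_add) simp

theorem lemmaA1:
  shows "\<exists>\<kappa>1 \<kappa>2 :: real. \<kappa>1 > 1 \<and> \<kappa>2 > 1 \<and>
    (\<forall>b1 b2 b3 :: real. b1 \<ge> 1 \<longrightarrow> b2 \<ge> \<kappa>1 * b1 \<longrightarrow> b3 \<ge> \<kappa>2 * b2 \<longrightarrow>
      (\<forall>\<beta> :: real. \<beta> \<ge> 1 \<longrightarrow> N2 \<beta> ` C3 b1 b2 b3 \<subseteq> C3 b1 b2 b3))"
proof (intro exI[of _ 5] conjI allI impI)
  fix b1 b2 b3 \<beta> :: real
  assume b1: "b1 \<ge> 1" and b2: "b2 \<ge> 5 * b1" and b3: "b3 \<ge> 5 * b2" and \<beta>: "\<beta> \<ge> 1"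
  define S :: "real set" where "S = {0<..1}"
  define s where "s = 1 / \<beta>"
  define a where "a = 1 - s"
  define c where "c = s / 2"
  have s0: "0 < s" and s1: "s \<le> 1" using \<beta> by (auto simp: s_def)
  have a0: "0 \<le> a" and a1: "a \<le> 1" using s0 s1 by (auto simp: a_def)
  define h where "h x = c * x powr (s - 1)" for x :: real
  define h1 where "h1 x = c * (s - 1) * x powr (s - 2)" for x :: real
  define h2 where "h2 x = c * (s - 1) * (s - 2) * x powr (s - 3)" for x :: real
  define h3 where "h3 x = c * (s - 1) * (s - 2) * (s - 3) * x powr (s - 4)" for x :: real
  define u where "u = g2 \<beta>"
  have u_eq: "u x = (x powr s + 1) / 2" for x by (simp add: u_def g2_def s_def)
  have Spos: "x \<in> S \<Longrightarrow> 0 < x" and Sle: "x \<in> S \<Longrightarrow> x \<le> 1" for x by (auto simp: S_def)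
  have uS: "u x \<in> S" if "x \<in> S" for x
  proof -
    have "x powr s \<le> 1" using Spos[OF that] Sle[OF that] s0 by (simp add: powr_le1)
    moreover have "x powr s > 0" using Spos[OF that] by simp
    have "0 < (x powr s + 1) / 2" using Spos[OF that] by (intro divide_pos_pos add_pos_pos) simp_all
    have "(x powr s + 1) / 2 \<le> 1" using \<open>x powr s \<le> 1\<close> by (simp add: field_simps)
    then show ?thesis using \<open>0 < (x powr s + 1) / 2\<close> by (simp add: S_def u_eq)
  qed
  have du_at: "(u has_real_derivative h x) (at x)" if "0 < x" for x
  proof -
    have "((\<lambda>x. (x powr s + 1) / 2) has_real_derivative (s * x powr (s - 1) + 0) / 2) (at x)"
      by (intro DERIV_cdivide DERIV_add has_real_derivative_powr that DERIV_const)
    moreover have "(\<lambda>x. (x powr s + 1) / 2) = u" using u_eq by auto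
    ultimately show ?thesis by (simp add: h_def c_def)
  qed
  have pw: "((\<lambda>x. x powr (s - r)) has_real_derivative (s - r) * x powr (s - (r + 1))) (at x)"
    if "0 < x" for x r :: real
    using has_real_derivative_powr[OF that, of "s - r"] by (simp add: algebra_simps)
  have dh_at: "(h has_real_derivative h1 x) (at x)" if "0 < x" for x
    using DERIV_cmult[OF pw[OF that, of 1], of c] unfolding h_def h1_def
    by (simp add: algebra_simps)
  have dh1_at: "(h1 has_real_derivative h2 x) (at x)" if "0 < x" for x
    using DERIV_cmult[OF pw[OF that, of 2], of "c * (s - 1)"] unfolding h1_def h2_def
    by (simp add: algebra_simps)
  have dh2_at: "(h2 has_real_derivative h3 x) (at x)" if "0 < x" for x
    using DERIV_cmult[OF pw[OF that, of 3], of "c * (s - 1) * (s - 2)"] unfolding h2_def h3_def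
    by (simp add: algebra_simps)
  have dh3_at: "(h3 has_real_derivative (c * (s - 1) * (s - 2) * (s - 3) * ((s - 4) * x powr (s - 5)))) (at x)"
    if "0 < x" for x
    using DERIV_cmult[OF pw[OF that, of 4], of "c * (s - 1) * (s - 2) * (s - 3)"] unfolding h3_def
    by (simp add: algebra_simps)
  have du: "(u has_real_derivative h x) (at x within S)" if "x \<in> S" for x
    by (rule has_field_derivative_at_within[OF du_at[OF Spos[OF that]]])
  have dh: "(h has_real_derivative h1 x) (at x within S)" if "x \<in> S" for x
    by (rule has_field_derivative_at_within[OF dh_at[OF Spos[OF that]]])
  have dh1: "(h1 has_real_derivative h2 x) (at x within S)" if "x \<in> S" for x
    by (rule has_field_derivative_at_within[OF dh1_at[OF Spos[OF that]]])
  have dh2: "(h2 has_real_derivative h3 x) (at x within S)" if "x \<in> S" for x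
    by (rule has_field_derivative_at_within[OF dh2_at[OF Spos[OF that]]])
  have deriv_u: "deriv (g2 \<beta>) x = h x" if "0 < x" for x
    using DERIV_imp_deriv[OF du_at[OF that]] by (simp add: u_def)
  have hpos: "h x > 0" if "0 < x" for x using that s0 by (simp add: h_def c_def)
  have h1e: "h1 x = - a * h x / x" if "0 < x" for x
  proof -
    have "x powr (s - 1) = x powr (s - 2) * x" using powr_shift[OF that, of "s - 2"] by simp
    then show ?thesis using that by (simp add: h_def h1_def a_def field_simps)
  qed
  have h2e: "h2 x = a * (a + 1) * h x / x^2" if "0 < x" for x
  proof -
    have "x powr (s - 1) = x powr (s - 3) * x * x" using powr_shift[OF that, of "s - 2"]
      powr_shift[OF that, of "s - 3"] by simp
    then show ?thesis using that by (simp add: h_def h2_def a_def field_simps power2_eq_square)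
  qed
  have h3e: "h3 x = - a * (a + 1) * (a + 2) * h x / x^3" if "0 < x" for x
  proof -
    have "x powr (s - 1) = x powr (s - 4) * x * x * x" using powr_shift[OF that, of "s - 2"]
      powr_shift[OF that, of "s - 3"] powr_shift[OF that, of "s - 4"] by simp
    then show ?thesis using that by (simp add: h_def h3_def a_def field_simps power3_eq_cube)
  qed
  have upos: "u x > 0" if "0 < x" for x using that by (simp add: u_eq add_pos_nonneg)
  have tb: "x * h x / u x \<le> (1 - a) / 2" if "x \<in> S" for x
  proof -
    have x0: "0 < x" using Spos[OF that] .
    have y1: "x powr s \<le> 1" using x0 Sle[OF that] s0 by (simp add: powr_le1)
    have y0: "x powr s > 0" using x0 by simp
    have "x * x powr (s - 1) = x powr s" using powr_shift[OF x0, of "s - 1"] by simp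
    then have "x * h x / u x = s * x powr s / (x powr s + 1)"
      by (simp add: h_def c_def u_eq field_simps)
    also have "\<dots> \<le> s / 2"
    proof -
      have yy: "s * x powr s \<le> s / 2 * (x powr s + 1)"
        using mult_left_mono[OF y1, of s] s0 by (simp add: algebra_simps)
      have "0 < x powr s + 1" using y0 by linarith
      then show ?thesis using pos_divide_le_eq[of "x powr s + 1" "s * x powr s" "s/2"] yy by simp
    qed
    finally show ?thesis by (simp add: a_def)
  qed
  have tb2: "x * h x / u x \<le> 1 / 2" if "x \<in> S" for x using tb[OF that] a0 by simp
  have N2e: "N2 \<beta> p x = h x * p (u x)" if "x \<in> S" for p x
    using deriv_u[OF Spos[OF that]] by (simp add: N2_def u_def)
  show "N2 \<beta> ` C3 b1 b2 b3 \<subseteq> C3 b1 b2 b3"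
  proof
    fix q assume "q \<in> N2 \<beta> ` C3 b1 b2 b3"
    then obtain p where pC: "p \<in> C3 b1 b2 b3" and q: "q = N2 \<beta> p" by blast
    from pC have "\<exists>f1 f2 f3. (\<forall>x\<in>S. (p has_real_derivative f1 x) (at x within S) \<and>
                   (f1 has_real_derivative f2 x) (at x within S) \<and>
                   (f2 has_real_derivative f3 x) (at x within S)) \<and>
      continuous_on S f3 \<and>
      (\<forall>x\<in>S. p x \<ge> 0 \<and> \<bar>f1 x\<bar> \<le> b1 / x * p x \<and>
        \<bar>f2 x\<bar> \<le> b2 / x ^ 2 * p x \<and> \<bar>f3 x\<bar> \<le> b3 / x ^ 3 * p x)"
      unfolding C3_def mem_Collect_eq S_def .
    then obtain f1 f2 f3 where all: "(\<forall>x\<in>S. (p has_real_derivative f1 x) (at x within S) \<and>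
                   (f1 has_real_derivative f2 x) (at x within S) \<and>
                   (f2 has_real_derivative f3 x) (at x within S)) \<and>
      continuous_on S f3 \<and>
      (\<forall>x\<in>S. p x \<ge> 0 \<and> \<bar>f1 x\<bar> \<le> b1 / x * p x \<and>
        \<bar>f2 x\<bar> \<le> b2 / x ^ 2 * p x \<and> \<bar>f3 x\<bar> \<le> b3 / x ^ 3 * p x)"
      by iprover
    note D = conjunct1[OF all] and cf3 = conjunct1[OF conjunct2[OF all]]
      and B = conjunct2[OF conjunct2[OF all]]
    have d0: "\<And>x. x \<in> S \<Longrightarrow> (p has_real_derivative f1 x) (at x within S)"
      and d1: "\<And>x. x \<in> S \<Longrightarrow> (f1 has_real_derivative f2 x) (at x within S)"
      and d2: "\<And>x. x \<in> S \<Longrightarrow> (f2 has_real_derivative f3 x) (at x within S)"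
      using D by auto
    define F1 where "F1 x = h1 x * p (u x) + h x * h x * f1 (u x)" for x
    define F2 where "F2 x = h2 x * p (u x) + 3 * h x * h1 x * f1 (u x) + h x * h x * h x * f2 (u x)" for x
    define F3 where "F3 x = h3 x * p (u x) + (4 * h x * h2 x + 3 * h1 x * h1 x) * f1 (u x)
       + 6 * h x * h x * h1 x * f2 (u x) + h x * h x * h x * h x * f3 (u x)" for x
    have CH1: "((\<lambda>x. h x * p (u x)) has_real_derivative F1 x) (at x within S)" if "x \<in> S" for x
      unfolding F1_def
      by (rule chain3(1), (erule uS du dh dh1 dh2 d0 d1 d2)+, rule that)
    have E2: "(F1 has_real_derivative F2 x) (at x within S)" if "x \<in> S" for x
      unfolding F1_def F2_def
      by (rule chain3(2), (erule uS du dh dh1 dh2 d0 d1 d2)+, rule that)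
    have E3: "(F2 has_real_derivative F3 x) (at x within S)" if "x \<in> S" for x
      unfolding F2_def F3_def
      by (rule chain3(3), (erule uS du dh dh1 dh2 d0 d1 d2)+, rule that)
    have E1: "(q has_real_derivative F1 x) (at x within S)" if "x \<in> S" for x
      by (rule has_field_derivative_transform_within[OF CH1[OF that] zero_less_one that])
         (simp add: q N2e)
    have cu: "continuous_on S u" by (rule DERIV_continuous_on[OF du])
    have uSS: "u ` S \<subseteq> S" using uS by auto
    have cp: "continuous_on S (\<lambda>x. p (u x))"
      by (rule continuous_on_compose2[OF DERIV_continuous_on[OF d0] cu uSS])
    have cf1: "continuous_on S (\<lambda>x. f1 (u x))"
      by (rule continuous_on_compose2[OF DERIV_continuous_on[OF d1] cu uSS])
    have cf2: "continuous_on S (\<lambda>x. f2 (u x))"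
      by (rule continuous_on_compose2[OF DERIV_continuous_on[OF d2] cu uSS])
    have cf3': "continuous_on S (\<lambda>x. f3 (u x))"
      by (rule continuous_on_compose2[OF cf3 cu uSS])
    have ch: "continuous_on S h" by (rule DERIV_continuous_on[OF dh])
    have ch1: "continuous_on S h1" by (rule DERIV_continuous_on[OF dh1])
    have ch2: "continuous_on S h2" by (rule DERIV_continuous_on[OF dh2])
    have ch3: "continuous_on S h3"
      by (rule DERIV_continuous_on[OF has_field_derivative_at_within[OF dh3_at[OF Spos]]])
    have cF3: "continuous_on S F3" unfolding F3_def
      by (intro continuous_intros ch ch1 ch2 ch3 cp cf1 cf2 cf3')
    have bounds: "q x \<ge> 0 \<and> \<bar>F1 x\<bar> \<le> b1 / x * q x \<and>
        \<bar>F2 x\<bar> \<le> b2 / x ^ 2 * q x \<and> \<bar>F3 x\<bar> \<le> b3 / x ^ 3 * q x" if xS: "x \<in> S" for x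
    proof -
      have x0: "0 < x" using Spos[OF xS] .
      have uxS: "u x \<in> S" using uS[OF xS] .
      have Bu: "p (u x) \<ge> 0" "\<bar>f1 (u x)\<bar> \<le> b1 / u x * p (u x)"
        "\<bar>f2 (u x)\<bar> \<le> b2 / (u x) ^ 2 * p (u x)" "\<bar>f3 (u x)\<bar> \<le> b3 / (u x) ^ 3 * p (u x)"
        using B uxS by auto
      have qx: "q x = h x * p (u x)" using N2e[OF xS] q by simp
      show ?thesis
        unfolding qx F1_def F2_def F3_def
        using hpos[OF x0] Bu(1)
          bound1[OF x0 hpos[OF x0] upos[OF x0] Bu(1) a0 a1 refl tb[OF xS] h1e[OF x0] Bu(2) b1]
          bound2[OF x0 hpos[OF x0] upos[OF x0] Bu(1) a0 a1 refl tb2[OF xS] h1e[OF x0] h2e[OF x0] Bu(2) Bu(3) b1 b2]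
          bound3'[OF x0 hpos[OF x0] upos[OF x0] Bu(1) a0 a1 refl tb2[OF xS] h1e[OF x0] h2e[OF x0] h3e[OF x0] Bu(2) Bu(3) Bu(4) b1 b2 b3]
        by simp
    qed
    have all': "(\<forall>x\<in>S. (q has_real_derivative F1 x) (at x within S) \<and>
                   (F1 has_real_derivative F2 x) (at x within S) \<and>
                   (F2 has_real_derivative F3 x) (at x within S)) \<and>
      continuous_on S F3 \<and>
      (\<forall>x\<in>S. q x \<ge> 0 \<and> \<bar>F1 x\<bar> \<le> b1 / x * q x \<and>
        \<bar>F2 x\<bar> \<le> b2 / x ^ 2 * q x \<and> \<bar>F3 x\<bar> \<le> b3 / x ^ 3 * q x)"
      using E1 E2 E3 cF3 bounds by simp
    show "q \<in> C3 b1 b2 b3"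
      unfolding C3_def mem_Collect_eq
      by (rule exI[of _ F1], rule exI[of _ F2], rule exI[of _ F3], fold S_def, rule all')
  qed
qed (simp_all)

end
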